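(* Let $(G;+)$ be a finite abelian group, $n\ge3$, and $\rho=\{(a_1,\dots,a_n)\in G^n:\ a_1+\dots+a_n=0\}$. Suppose $\rho$ is preserved by a WNU vector-function $(f_1,\dots,f_n)$ of arity $m$. Then for every $j\in\{1,\dots,n\}$ there is a positive integer $t$ with $f_j(x_1,\dots,x_m)=t\cdot x_1+\dots+t\cdot x_m$ for all $x_1,\dots,x_m\in G$.
   Context: A WNU is an $m$-ary ($m\ge2$) operation $f$ with $f(x,\dots,x)=x$ and $f(y,x,\dots,x)=f(x,y,x,\dots,x)=\dots=f(x,\dots,x,y)$. A WNU vector-function of arity $m$ is a tuple $(f_1,\dots,f_n)$ of $m$-ary WNUs on $G$; it preserves $\rho\subseteq G^n$ if for all $\alpha^1,\dots,\alpha^m\in\rho$ the tuple $(f_1(\alpha^1(1),\dots,\alpha^m(1)),\dots,f_n(\alpha^1(n),\dots,\alpha^m(n)))\in\rho$. $t\cdot x$ denotes $x+\dots+x$ ($t$ times). *)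

theory Defs
  imports Main
begin

definition tmul :: "nat \<Rightarrow> 'a::comm_monoid_add \<Rightarrow> 'a" where
  "tmul t x = (\<Sum>_<t. x)"

(* an m-ary operation on 'a is represented as a function on lists of length m *)
definition is_WNU :: "nat \<Rightarrow> ('a list \<Rightarrow> 'a) \<Rightarrow> bool" where
  "is_WNU m f \<longleftrightarrow> m \<ge> 2 \<and>
     (\<forall>x. f (replicate m x) = x) \<and>
     (\<forall>x y. \<forall>i<m. f ((replicate m x)[i := y]) = f ((replicate m x)[0 := y]))"

(* rho as a relation on n-tuples indexed by 1..n (components outside 1..n irrelevant) *)
definition zero_sum_rel :: "nat \<Rightarrow> (nat \<Rightarrow> 'a::comm_monoid_add) set" where
  "zero_sum_rel n = {a. (\<Sum>i=1..n. a i) = 0}"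

definition preserves :: "nat \<Rightarrow> nat \<Rightarrow> (nat \<Rightarrow> 'a list \<Rightarrow> 'a) \<Rightarrow> (nat \<Rightarrow> 'a) set \<Rightarrow> bool" where
  "preserves n m f rho \<longleftrightarrow>
     (\<forall>\<alpha> :: nat \<Rightarrow> nat \<Rightarrow> 'a. (\<forall>k<m. \<alpha> k \<in> rho) \<longrightarrow>
        (\<lambda>i. f i (map (\<lambda>k. \<alpha> k i) [0..<m])) \<in> rho)"

end

theory Submission
  imports Defs
begin

lemma tmul_0[simp]: "tmul 0 x = 0" by (simp add: tmul_def)
lemma tmul_1[simp]: "tmul (Suc 0) x = x" by (simp add: tmul_def)
lemma tmul_Suc: "tmul (Suc t) x = tmul t x + x" by (simp add: tmul_def)
lemma tmul_add_nat: "tmul (a+b) (x::'a::comm_monoid_add) = tmul a x + tmul b x"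
  by (induct b) (simp_all add: tmul_Suc add.assoc)
lemma tmul_mult: "tmul (a*b) (x::'a::comm_monoid_add) = tmul a (tmul b x)"
  by (induct a) (simp_all add: tmul_Suc tmul_add_nat add.commute)
lemma tmul_hom:
  fixes h :: "'a::ab_group_add \<Rightarrow> 'a"
  assumes "\<And>a b. h (a+b) = h a + h b"
  shows "h (tmul t x) = tmul t (h x)"
proof -
  have "h 0 = 0" using assms[of 0 0] by simp
  then show ?thesis by (induct t) (simp_all add: tmul_Suc assms)
qed

lemma aux3:
  fixes A B C S :: "'a::ab_group_add"
  assumes "A + (B + C) = 0" "S + C = 0"
  shows "S = A + B"
proof -
  have "S = - C" using assms(2) by (simp add: eq_neg_iff_add_eq_0)
  moreover have "A + B = - C" using assms(1) by (simp add: eq_neg_iff_add_eq_0 add.assoc)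
  ultimately show ?thesis by simp
qed

theorem mainTheorem15:
  fixes f :: "nat \<Rightarrow> 'a::{ab_group_add, finite} list \<Rightarrow> 'a"
    and n m :: nat
  assumes "n \<ge> 3"
    and "\<forall>j\<in>{1..n}. is_WNU m (f j)"
    and "preserves n m f (zero_sum_rel n)"
  shows "\<forall>j\<in>{1..n}. \<exists>t::nat. t > 0 \<and>
           (\<forall>xs. length xs = m \<longrightarrow> f j xs = (\<Sum>x\<leftarrow>xs. tmul t x))"
proof -
  have wnu: "\<And>j. j\<in>{1..n} \<Longrightarrow> is_WNU m (f j)" using assms(2) by blast
  have m2: "m \<ge> 2" using wnu[of 1] assms(1) by (simp add: is_WNU_def)
  have f0: "\<And>i. i\<in>{1..n} \<Longrightarrow> f i (replicate m 0) = 0" using wnu by (simp add: is_WNU_def)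
  have key3: "f j xs + f l ys + f p zs = 0"
    if jn: "j\<in>{1..n}" and ln: "l\<in>{1..n}" and pn: "p\<in>{1..n}" and d: "j\<noteq>l" "j\<noteq>p" "l\<noteq>p"
      and lens: "length xs = m" "length ys = m" "length zs = m"
      and s: "\<forall>k<m. xs!k + ys!k + zs!k = 0"
    for j l p xs ys zs
  proof -
    define \<alpha> where "\<alpha> k i = (if i=j then xs!k else 0) + (if i=l then ys!k else 0) + (if i=p then zs!k else 0)" for k i
    have "\<forall>k<m. \<alpha> k \<in> zero_sum_rel n"
      unfolding zero_sum_rel_def \<alpha>_def using jn ln pn s by (simp add: sum.distrib)
    then have "(\<lambda>i. f i (map (\<lambda>k. \<alpha> k i) [0..<m])) \<in> zero_sum_rel n"
      using assms(3) unfolding preserves_def by blast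
    moreover have "map (\<lambda>k. \<alpha> k i) [0..<m] = (if i=j then xs else if i=l then ys else if i=p then zs else replicate m 0)" for i
      by (rule nth_equalityI) (use d lens in \<open>auto simp: \<alpha>_def\<close>)
    ultimately have "(\<Sum>i=1..n. f i (if i=j then xs else if i=l then ys else if i=p then zs else replicate m 0)) = 0"
      by (simp add: zero_sum_rel_def)
    also have "(\<Sum>i=1..n. f i (if i=j then xs else if i=l then ys else if i=p then zs else replicate m 0))
       = (\<Sum>i=1..n. (if i=j then f j xs else 0) + (if i=l then f l ys else 0) + (if i=p then f p zs else 0))"
      by (rule sum.cong) (use d f0 in auto)
    also have "\<dots> = f j xs + f l ys + f p zs" using jn ln pn by (simp add: sum.distrib)
    finally show ?thesis by simp
  qed
  have third: "\<exists>p\<in>{1..n}. p \<noteq> j \<and> p \<noteq> l" for j l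
  proof -
    have "\<exists>p\<in>{1,2,3::nat}. p \<noteq> j \<and> p \<noteq> l" by auto
    then show ?thesis using assms(1) by auto
  qed
  have pair: "f j xs = - f l (map uminus xs)"
    if "j\<in>{1..n}" "l\<in>{1..n}" "j\<noteq>l" "length xs = m" for j l xs
  proof -
    obtain p where p: "p\<in>{1..n}" "p \<noteq> j" "p \<noteq> l" using third by blast
    have "f j xs + f l (map uminus xs) + f p (replicate m 0) = 0"
      by (rule key3) (use that p in auto)
    then show ?thesis using f0[OF p(1)] by (simp add: eq_neg_iff_add_eq_0)
  qed
  have same: "f j xs = f 1 xs" if "j\<in>{1..n}" "length xs = m" for j xs
  proof (cases "j = 1")
    case False
    obtain p where p: "p\<in>{1..n}" "p \<noteq> j" "p \<noteq> 1" using third by blast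
    have "f j xs = - f p (map uminus xs)" by (rule pair) (use that p in auto)
    also have "\<dots> = f 1 xs" by (rule pair[symmetric]) (use that p assms(1) in auto)
    finally show ?thesis .
  qed simp
  define \<Phi> where "\<Phi> v = f 1 (map v [0..<m])" for v :: "nat \<Rightarrow> 'a"
  have n123: "1\<in>{1..n}" "2\<in>{1..n}" "3\<in>{1..n}" using assms(1) by auto
  have Phiadd: "\<Phi> (\<lambda>i. v i + w i) = \<Phi> v + \<Phi> w" for v w
  proof -
    have k: "f 1 (map v [0..<m]) + f 2 (map w [0..<m]) + f 3 (map (\<lambda>i. -(v i + w i)) [0..<m]) = 0"
      by (rule key3) (use n123 in auto)
    have a: "f 2 (map w [0..<m]) = \<Phi> w" unfolding \<Phi>_def by (rule same) (use n123 in auto)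
    have b1: "f 3 (map (\<lambda>i. -(v i + w i)) [0..<m]) = f 1 (map (\<lambda>i. -(v i + w i)) [0..<m])"
      by (rule same) (use n123 in auto)
    have b2: "f 2 (map (\<lambda>i. -(v i + w i)) [0..<m]) = f 1 (map (\<lambda>i. -(v i + w i)) [0..<m])"
      by (rule same) (use n123 in auto)
    have c: "\<Phi> (\<lambda>i. v i + w i) = - f 2 (map uminus (map (\<lambda>i. v i + w i) [0..<m]))"
      unfolding \<Phi>_def by (rule pair) (use n123 in auto)
    have k': "\<Phi> v + (\<Phi> w + f 1 (map (\<lambda>i. -(v i + w i)) [0..<m])) = 0"
      using k a b1 unfolding \<Phi>_def by (simp add: add.assoc)
    have c': "\<Phi> (\<lambda>i. v i + w i) + f 1 (map (\<lambda>i. -(v i + w i)) [0..<m]) = 0"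
      using c b2 by (simp add: o_def eq_neg_iff_add_eq_0)
    show ?thesis by (rule aux3[OF k' c'])
  qed
  have Phi0: "\<Phi> (\<lambda>_. 0) = 0" using f0[OF n123(1)] by (simp add: \<Phi>_def map_replicate_const)
  define h where "h a = \<Phi> (\<lambda>i. if i = 0 then a else 0)" for a
  have Phidelta: "\<Phi> (\<lambda>i. if i = k then a else 0) = h a" if "k < m" for k a
  proof -
    have "map (\<lambda>i. if i = k then a else 0) [0..<m] = (replicate m 0)[k := a]"
      by (rule nth_equalityI) auto
    moreover have "map (\<lambda>i. if i = 0 then a else 0) [0..<m] = (replicate m 0)[0 := a]"
      by (rule nth_equalityI) auto
    moreover have "f 1 ((replicate m 0)[k := a]) = f 1 ((replicate m 0)[0 := a])"
      using wnu[OF n123(1)] that unfolding is_WNU_def by blast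
    ultimately show ?thesis by (simp add: \<Phi>_def h_def)
  qed
  have hadd: "h (a + b) = h a + h b" for a b
    unfolding h_def using Phiadd[of "\<lambda>i. if i = 0 then a else 0" "\<lambda>i. if i = 0 then b else 0"]
    by (simp add: if_distrib cong: if_cong)
  have decomp: "K \<le> m \<Longrightarrow> \<Phi> (\<lambda>i. if i < K then v i else 0) = (\<Sum>k<K. h (v k))" for K v
  proof (induct K)
    case 0 then show ?case using Phi0 by simp
  next
    case (Suc K)
    have "(\<lambda>i. if i < Suc K then v i else 0) = (\<lambda>i. (if i < K then v i else 0) + (if i = K then v K else 0))"
      by auto
    then have "\<Phi> (\<lambda>i. if i < Suc K then v i else 0) = \<Phi> (\<lambda>i. if i < K then v i else 0) + \<Phi> (\<lambda>i. if i = K then v K else 0)"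
      using Phiadd by simp
    then show ?case using Suc Phidelta[of K "v K"] by simp
  qed
  have Phisum: "\<Phi> v = (\<Sum>k<m. h (v k))" for v
  proof -
    have e: "map (\<lambda>i. if i < m then v i else 0) [0..<m] = map v [0..<m]" by simp
    have "\<Phi> (\<lambda>i. if i < m then v i else 0) = \<Phi> v" unfolding \<Phi>_def e ..
    then show ?thesis using decomp[of m v] by simp
  qed
  have hm: "tmul m (h x) = x" for x
  proof -
    have "f 1 (replicate m x) = x" using wnu[OF n123(1)] by (simp add: is_WNU_def)
    moreover have "replicate m x = map (\<lambda>_. x) [0..<m]" by (simp add: map_replicate_const)
    ultimately have "\<Phi> (\<lambda>_. x) = x" by (simp add: \<Phi>_def)
    then show ?thesis using Phisum[of "\<lambda>_. x"] by (simp add: tmul_def)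
  qed
  have hinv: "h (tmul m y) = y" for y using tmul_hom[of h, OF hadd] hm by simp
  define P where "P k = (\<lambda>x::'a. tmul (m^k) x)" for k
  have "\<not> inj P"
  proof
    assume "inj P"
    have "finite (range P)" by simp
    then have "finite (UNIV :: nat set)" using \<open>inj P\<close> finite_imageD by blast
    then show False by simp
  qed
  then obtain i j where ij: "i \<noteq> j" "P i = P j" unfolding inj_def by blast
  obtain i d where id: "d > 0" "\<forall>x::'a. tmul (m^i) x = tmul (m^(i+d)) x"
  proof (cases "i < j")
    case True
    have "\<forall>x::'a. tmul (m^i) x = tmul (m^(i + (j - i))) x" using True ij(2) by (simp add: P_def fun_eq_iff)
    moreover have "j - i > 0" using True by simp
    ultimately show ?thesis by (rule that[rotated])
  next
    case False
    have "\<forall>x::'a. tmul (m^j) x = tmul (m^(j + (i - j))) x" using False ij by (simp add: P_def fun_eq_iff)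
    moreover have "i - j > 0" using False ij(1) by simp
    ultimately show ?thesis by (rule that[rotated])
  qed
  have powS: "tmul (m^Suc k) y = tmul m (tmul (m^k) y)" for k y
    by (simp add: tmul_mult)
  have canc: "\<forall>x::'a. tmul (m^i') x = tmul (m^(i'+d)) x \<Longrightarrow> \<forall>x::'a. x = tmul (m^d) x" for i'
  proof (induct i')
    case 0 then show ?case by simp
  next
    case (Suc i')
    have "\<forall>x::'a. tmul (m^i') x = tmul (m^(i'+d)) x"
    proof
      fix x
      have "tmul (m^i') x = h (tmul (m^Suc i') x)" unfolding powS hinv ..
      also have "\<dots> = h (tmul (m^(Suc i' + d)) x)" using Suc.prems by simp
      also have "\<dots> = tmul (m^(i'+d)) x" unfolding add_Suc powS hinv ..
      finally show "tmul (m^i') x = tmul (m^(i'+d)) x" .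
    qed
    then show ?case using Suc.hyps by blast
  qed
  have per: "\<forall>x::'a. x = tmul (m^d) x" using canc id(2) by blast
  define t where "t = m^(d - 1)"
  have tpos: "t > 0" using m2 by (simp add: t_def)
  have ht: "h x = tmul t x" for x
  proof -
    have "h x = tmul (m^d) (h x)" using per by blast
    also have "m^d = t * m" using id(1) by (simp add: t_def power_eq_if)
    also have "tmul (t * m) (h x) = tmul t x" by (simp add: tmul_mult hm)
    finally show ?thesis .
  qed
  show ?thesis
  proof (intro ballI)
    fix j assume j: "j\<in>{1..n}"
    show "\<exists>t::nat. t > 0 \<and> (\<forall>xs. length xs = m \<longrightarrow> f j xs = (\<Sum>x\<leftarrow>xs. tmul t x))"
    proof (rule exI[of _ t], intro conjI allI impI)
    show "t > 0" by (rule tpos)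
    fix xs :: "'a list" assume len: "length xs = m"
    have "f j xs = f 1 xs" using same[OF j len] .
    also have "\<dots> = \<Phi> (\<lambda>k. xs ! k)" unfolding \<Phi>_def using len map_nth[of xs] by simp
    also have "\<dots> = (\<Sum>k<m. tmul t (xs ! k))" by (simp add: Phisum ht)
    also have "\<dots> = (\<Sum>x\<leftarrow>xs. tmul t x)"
      using len by (simp add: sum_list_sum_nth atLeast0LessThan)
    finally show "f j xs = (\<Sum>x\<leftarrow>xs. tmul t x)" .
  qed
  qed
qed

end
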